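(* Let $\boldsymbol\lambda=(\lambda^{(1)},\dots,\lambda^{(k)})$ be polynomial $\mathfrak{gl}_{1|1}$-weights with $\lambda^{(s)}_2=0$ and $\lambda^{(s)}_1>0$ for all $s$, let $\boldsymbol b\in\mathbb{C}^k$, and let $\boldsymbol a=(a_1,\dots,a_n)$ be the sequence obtained by arranging the union of the sequences $\{b_s,b_s-1,\dots,b_s-\lambda^{(s)}_1+1\}$, $s=1,\dots,k$, in decreasing order of real parts. If $L(\boldsymbol\lambda,\boldsymbol b)$ is cyclic, then there exists a surjective $\mathrm{Y}(\mathfrak{gl}_{1|1})$-module homomorphism $V(\boldsymbol a)=\mathbb{C}^{1|1}(a_1)\otimes\cdots\otimes\mathbb{C}^{1|1}(a_n)\to L(\boldsymbol\lambda,\boldsymbol b)$ mapping the vacuum vector $v_1^{\otimes n}$ to the vacuum vector $|0\rangle$.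
   Context: $\mathbb{C}^{1|1}$ has basis $v_1$ (even), $v_2$ (odd), $|1|=\bar0,|2|=\bar1$; $\mathfrak{gl}_{1|1}$ has basis $e_{ij}$ with $[e_{ij},e_{rs}]=\delta_{jr}e_{is}-(-1)^{(|i|+|j|)(|r|+|s|)}\delta_{is}e_{rj}$, acting on $\mathbb{C}^{1|1}$ by $e_{ij}v_r=\delta_{jr}v_i$. $P=\sum_{i,j}(-1)^{|j|}E_{ij}\otimes E_{ji}$, $\mathcal R(x)=1+P/x$. $\mathrm{Y}(\mathfrak{gl}_{1|1})$ is generated by $T^{(r)}_{ij}$ ($r\ge1$, parity $|i|+|j|$) with $\mathcal R^{(12)}(x_1-x_2)T^{(13)}(x_1)T^{(23)}(x_2)=T^{(23)}(x_2)T^{(13)}(x_1)\mathcal R^{(12)}(x_1-x_2)$, $T_{ij}(x)=\delta_{ij}+\sum_rT^{(r)}_{ij}x^{-r}$; coproduct $\Delta(T_{ij}(x))=\sum_rT_{rj}(x)\otimes T_{ir}(x)$. Evaluation module $M(z)$: $T_{ij}(x)$ acts by $\delta_{ij}+(-1)^{|j|}e_{ji}(x-z)^{-1}$. $L_\lambda$ is the irreducible $\mathfrak{gl}_{1|1}$-module generated by an even $v_\lambda$ with $e_{12}v_\lambda=0$, $e_{ii}v_\lambda=\lambda_iv_\lambda$ (so $\mathbb{C}^{1|1}\cong L_{(1,0)}$). $L(\boldsymbol\lambda,\boldsymbol b)=\bigotimes_sL_{\lambda^{(s)}}(b_s)$ with vacuum $|0\rangle=\otimes v_{\lambda^{(s)}}$;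 it is cyclic if generated by $|0\rangle$ as a $\mathrm{Y}(\mathfrak{gl}_{1|1})$-module. *)

theory Defs
  imports Complex_Main "HOL-Library.Multiset" "HOL-Computational_Algebra.Formal_Power_Series"
begin

(* Conventions.
   gl(1|1) indices 1,2 are encoded as bool: False = 1 (even), True = 2 (odd).
   A two-dimensional factor L_(l1,l2) (l1+l2 <> 0) has homogeneous basis
   False = v_lambda (even), True = e21 v_lambda (odd); C^{1|1} = L_(1,0) with
   False = v_1, True = v_2. *)

definition par :: "bool \<Rightarrow> nat" where
  "par x = (if x then 1 else 0)"

(* matrix entry <p| e_ij |q> on L_(l1,l2) *)
definition glE :: "complex \<times> complex \<Rightarrow> bool \<Rightarrow> bool \<Rightarrow> bool \<Rightarrow> bool \<Rightarrow> complex" where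
  "glE lam i j p q = (case (i, j) of
      (False, False) \<Rightarrow> (if p = q then (if q then fst lam - 1 else fst lam) else 0)
    | (True, True) \<Rightarrow> (if p = q then (if q then snd lam + 1 else snd lam) else 0)
    | (False, True) \<Rightarrow> (if \<not> p \<and> q then fst lam + snd lam else 0)
    | (True, False) \<Rightarrow> (if p \<and> \<not> q then 1 else 0))"

(* evaluation module L_lam(z): matrix entry of T_ab(x) = delta_ab + (-1)^|b| e_ba (x-z)^{-1},
   as a formal power series in x^{-1} *)
definition evT :: "complex \<times> complex \<Rightarrow> complex \<Rightarrow> bool \<Rightarrow> bool \<Rightarrow> bool \<Rightarrow> bool \<Rightarrow> complex fps" where
  "evT lam z a b p q = Abs_fps (\<lambda>m. if m = 0 then (if a = b \<and> p = q then 1 else 0)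
      else (-1) ^ par b * z ^ (m - 1) * glE lam b a p q)"

(* index chains c_0 = j, ..., c_n = i for the iterated coproduct
   Delta^(n) T_ij = sum T_{c1 c0} (x) T_{c2 c1} (x) ... (x) T_{cn c(n-1)} *)
definition chains :: "nat \<Rightarrow> bool \<Rightarrow> bool \<Rightarrow> bool list set" where
  "chains n j i = {cs. length cs = Suc n \<and> cs ! 0 = j \<and> cs ! n = i}"

(* Koszul sign exponent for (A_0 (x) ... (x) A_(n-1)) (q_0 (x) ... (x) q_(n-1)) *)
definition koszul :: "nat \<Rightarrow> bool list \<Rightarrow> bool list \<Rightarrow> nat" where
  "koszul n cs q = (\<Sum>t<n. \<Sum>s<t. (par (cs ! Suc t) + par (cs ! t)) * par (q ! s))"

(* matrix entry <p| T_ij(x) |q> on L_lam0(z0) (x) ... (x) L_lam(n-1)(z(n-1)) *)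
definition Yent :: "(nat \<Rightarrow> complex \<times> complex) \<Rightarrow> (nat \<Rightarrow> complex) \<Rightarrow> nat
    \<Rightarrow> bool \<Rightarrow> bool \<Rightarrow> bool list \<Rightarrow> bool list \<Rightarrow> complex fps" where
  "Yent lams zs n i j p q = (\<Sum>cs\<in>chains n j i. (-1) ^ koszul n cs q *
      (\<Prod>s<n. evT (lams s) (zs s) (cs ! Suc s) (cs ! s) (p ! s) (q ! s)))"

definition basis :: "nat \<Rightarrow> bool list set" where
  "basis n = {p. length p = n}"

(* the tensor product space, vectors = coordinate functions on the basis *)
definition space :: "nat \<Rightarrow> (bool list \<Rightarrow> complex) set" where
  "space n = {v. \<forall>p. length p \<noteq> n \<longrightarrow> v p = 0}"

definition Yact :: "(nat \<Rightarrow> complex \<times> complex) \<Rightarrow> (nat \<Rightarrow> complex) \<Rightarrow> nat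
    \<Rightarrow> nat \<Rightarrow> bool \<Rightarrow> bool \<Rightarrow> (bool list \<Rightarrow> complex) \<Rightarrow> (bool list \<Rightarrow> complex)" where
  "Yact lams zs n r i j v = (\<lambda>p. if length p = n
      then (\<Sum>q\<in>basis n. fps_nth (Yent lams zs n i j p q) r * v q) else 0)"

definition vac :: "nat \<Rightarrow> bool list \<Rightarrow> complex" where
  "vac n = (\<lambda>p. if p = replicate n False then 1 else 0)"

definition bparity :: "bool list \<Rightarrow> bool" where
  "bparity p = odd (length (filter id p))"

definition homog :: "nat \<Rightarrow> bool \<Rightarrow> (bool list \<Rightarrow> complex) set" where
  "homog n e = {v \<in> space n. \<forall>p. v p \<noteq> 0 \<longrightarrow> bparity p = e}"

definition Ycyclic :: "(nat \<Rightarrow> complex \<times> complex) \<Rightarrow> (nat \<Rightarrow> complex) \<Rightarrow> nat \<Rightarrow> bool" where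
  "Ycyclic lams zs n = (\<forall>W. W \<subseteq> space n \<and> vac n \<in> W
      \<and> (\<forall>u\<in>W. \<forall>w\<in>W. (\<lambda>p. u p + w p) \<in> W)
      \<and> (\<forall>c::complex. \<forall>u\<in>W. (\<lambda>p. c * u p) \<in> W)
      \<and> (\<forall>r\<ge>1. \<forall>i j. \<forall>u\<in>W. Yact lams zs n r i j u \<in> W)
      \<longrightarrow> W = space n)"

definition Yhom :: "(nat \<Rightarrow> complex \<times> complex) \<Rightarrow> (nat \<Rightarrow> complex) \<Rightarrow> nat
    \<Rightarrow> (nat \<Rightarrow> complex \<times> complex) \<Rightarrow> (nat \<Rightarrow> complex) \<Rightarrow> nat
    \<Rightarrow> ((bool list \<Rightarrow> complex) \<Rightarrow> (bool list \<Rightarrow> complex)) \<Rightarrow> bool" where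
  "Yhom lams zs n lams' zs' n' f = (
      (\<forall>v\<in>space n. f v \<in> space n')
    \<and> (\<forall>u\<in>space n. \<forall>w\<in>space n. f (\<lambda>p. u p + w p) = (\<lambda>p. f u p + f w p))
    \<and> (\<forall>c::complex. \<forall>u\<in>space n. f (\<lambda>p. c * u p) = (\<lambda>p. c * f u p))
    \<and> (\<forall>e. \<forall>v\<in>homog n e. f v \<in> homog n' e)
    \<and> (\<forall>r\<ge>1. \<forall>i j. \<forall>v\<in>space n.
          f (Yact lams zs n r i j v) = Yact lams' zs' n' r i j (f v)))"

end

theory Submission
  imports Defs
begin


lemma finite_basis[simp]: "finite (basis n)"
  unfolding basis_def using finite_lists_length_eq[of "UNIV::bool set" n] by simp

lemma finite_chains[simp]: "finite (chains n j i)"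
proof -
  have "chains n j i \<subseteq> basis (Suc n)" by (auto simp: chains_def basis_def)
  then show ?thesis by (rule finite_subset) simp
qed

definition qc :: "bool list \<Rightarrow> nat" where "qc q = length (filter id q)"

lemma sum_par_qc: "(\<Sum>s<length q. par (q ! s)) = qc q"
proof (induction q)
  case Nil then show ?case by (simp add: qc_def)
next
  case (Cons x q)
  have "(\<Sum>s<length (x # q). par ((x # q) ! s)) = par ((x#q) ! 0) + (\<Sum>s<length q. par ((x#q) ! Suc s))"
    unfolding length_Cons by (rule sum.lessThan_Suc_shift)
  then show ?case using Cons by (simp add: qc_def par_def)
qed

lemma Yent_cong:
  assumes "\<And>s. s < n \<Longrightarrow> lams s = lams' s \<and> zs s = zs' s"
  shows "Yent lams zs n i j p q = Yent lams' zs' n i j p q"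
proof -
  have "(\<Prod>s<n. evT (lams s) (zs s) (cs ! Suc s) (cs ! s) (p ! s) (q ! s)) =
        (\<Prod>s<n. evT (lams' s) (zs' s) (cs ! Suc s) (cs ! s) (p ! s) (q ! s))" for cs
    by (rule prod.cong[OF refl]) (simp add: assms)
  then show ?thesis unfolding Yent_def by simp
qed

lemma Yent_0: "Yent lams zs 0 i j p q = (if i = j then 1 else 0)"
proof -
  have "chains 0 j i = (if i = j then {[j]} else {})"
    by (auto simp: chains_def length_Suc_conv)
  then show ?thesis by (simp add: Yent_def koszul_def)
qed

lemma chains_Suc_split:
  "chains (Suc n) j i = (\<lambda>cs. cs @ [i]) ` (chains n j False \<union> chains n j True)"
proof (intro set_eqI iffI)
  fix cs assume "cs \<in> chains (Suc n) j i"
  then have l: "length cs = Suc (Suc n)" and h: "cs ! 0 = j" "cs ! Suc n = i" by (auto simp: chains_def)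
  define ds where "ds = butlast cs"
  have "cs \<noteq> []" using l by auto
  then have "cs = butlast cs @ [last cs]" by simp
  moreover have "last cs = i" using l h \<open>cs \<noteq> []\<close> by (simp add: last_conv_nth)
  ultimately have ds: "cs = ds @ [i]" "length ds = Suc n" using l by (simp_all add: ds_def)
  have "ds ! 0 = j" using ds h by (simp add: nth_append)
  then have "ds \<in> chains n j False \<union> chains n j True" using ds by (cases "ds ! n") (auto simp: chains_def)
  then show "cs \<in> (\<lambda>cs. cs @ [i]) ` (chains n j False \<union> chains n j True)" using ds by blast
next
  fix cs assume "cs \<in> (\<lambda>cs. cs @ [i]) ` (chains n j False \<union> chains n j True)"
  then obtain ds c where "cs = ds @ [i]" "ds \<in> chains n j c" by blast
  then show "cs \<in> chains (Suc n) j i" by (auto simp: chains_def nth_append)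
qed

lemma koszul_snoc:
  assumes "length cs = Suc n" "length q = n"
  shows "koszul (Suc n) (cs @ [i]) (q @ [y]) = koszul n cs q + (par i + par (cs ! n)) * qc q"
proof -
  have a: "(\<Sum>s<t. (par ((cs @ [i]) ! Suc t) + par ((cs @ [i]) ! t)) * par ((q @ [y]) ! s))
      = (\<Sum>s<t. (par (cs ! Suc t) + par (cs ! t)) * par (q ! s))" if "t < n" for t
    using that assms by (intro sum.cong) (auto simp: nth_append)
  have b: "(\<Sum>s<n. (par ((cs @ [i]) ! Suc n) + par ((cs @ [i]) ! n)) * par ((q @ [y]) ! s))
      = (par i + par (cs ! n)) * qc q"
  proof -
    have "(\<Sum>s<n. (par ((cs @ [i]) ! Suc n) + par ((cs @ [i]) ! n)) * par ((q @ [y]) ! s))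
        = (\<Sum>s<n. (par i + par (cs ! n)) * par (q ! s))"
      using assms by (intro sum.cong) (auto simp: nth_append)
    also have "\<dots> = (par i + par (cs ! n)) * qc q"
      using sum_par_qc[of q] assms by (simp add: sum_distrib_left[symmetric])
    finally show ?thesis .
  qed
  have "koszul (Suc n) (cs @ [i]) (q @ [y]) =
     (\<Sum>t<n. \<Sum>s<t. (par ((cs @ [i]) ! Suc t) + par ((cs @ [i]) ! t)) * par ((q @ [y]) ! s))
     + (\<Sum>s<n. (par ((cs @ [i]) ! Suc n) + par ((cs @ [i]) ! n)) * par ((q @ [y]) ! s))"
    unfolding koszul_def by (simp only: sum.lessThan_Suc)
  also have "\<dots> = koszul n cs q + (par i + par (cs ! n)) * qc q"
  proof -
    have "(\<Sum>t<n. \<Sum>s<t. (par ((cs @ [i]) ! Suc t) + par ((cs @ [i]) ! t)) * par ((q @ [y]) ! s))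
       = (\<Sum>t<n. \<Sum>s<t. (par (cs ! Suc t) + par (cs ! t)) * par (q ! s))"
      by (rule sum.cong[OF refl]) (simp add: a)
    then show ?thesis unfolding koszul_def b by simp
  qed
  finally show ?thesis .
qed

lemma Yent_snoc:
  assumes "length p = n" "length q = n"
  shows "Yent lams zs (Suc n) i j (p @ [x]) (q @ [y]) =
    (\<Sum>c\<in>UNIV. (-1) ^ ((par i + par c) * qc q) * Yent lams zs n c j p q
        * evT (lams n) (zs n) i c x y)"
proof -
  define g where "g cs = (-1) ^ koszul (Suc n) cs (q @ [y]) *
      (\<Prod>s<Suc n. evT (lams s) (zs s) (cs ! Suc s) (cs ! s) ((p @ [x]) ! s) ((q @ [y]) ! s))" for cs
  have inj: "inj_on (\<lambda>cs. cs @ [i]) X" for X by (auto simp: inj_on_def)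
  have disj: "chains n j False \<inter> chains n j True = {}" by (auto simp: chains_def)
  have gc: "g (cs @ [i]) = (-1) ^ ((par i + par c) * qc q) * ((-1) ^ koszul n cs q *
      (\<Prod>s<n. evT (lams s) (zs s) (cs ! Suc s) (cs ! s) (p ! s) (q ! s))) * evT (lams n) (zs n) i c x y"
    if "cs \<in> chains n j c" for cs c
  proof -
    have l: "length cs = Suc n" "cs ! n = c" using that by (auto simp: chains_def)
    have pr: "(\<Prod>s<n. evT (lams s) (zs s) ((cs @ [i]) ! Suc s) ((cs @ [i]) ! s) ((p @ [x]) ! s) ((q @ [y]) ! s))
        = (\<Prod>s<n. evT (lams s) (zs s) (cs ! Suc s) (cs ! s) (p ! s) (q ! s))"
      using l assms by (intro prod.cong) (auto simp: nth_append)
    have last: "evT (lams n) (zs n) ((cs @ [i]) ! Suc n) ((cs @ [i]) ! n) ((p @ [x]) ! n) ((q @ [y]) ! n)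
       = evT (lams n) (zs n) i c x y" using l assms by (simp add: nth_append)
    have "g (cs @ [i]) = (-1) ^ (koszul n cs q + (par i + par c) * qc q) *
       ((\<Prod>s<n. evT (lams s) (zs s) (cs ! Suc s) (cs ! s) (p ! s) (q ! s)) * evT (lams n) (zs n) i c x y)"
      unfolding g_def by (simp only: koszul_snoc[OF l(1) assms(2)] prod.lessThan_Suc pr last l(2))
    then show ?thesis by (simp only: power_add mult_ac)
  qed
  have hc: "sum (\<lambda>cs. g (cs @ [i])) (chains n j c) = (-1) ^ ((par i + par c) * qc q) * Yent lams zs n c j p q
        * evT (lams n) (zs n) i c x y" for c
  proof -
    have "sum (\<lambda>cs. g (cs @ [i])) (chains n j c) = (\<Sum>cs\<in>chains n j c. (-1) ^ ((par i + par c) * qc q) * ((-1) ^ koszul n cs q *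
      (\<Prod>s<n. evT (lams s) (zs s) (cs ! Suc s) (cs ! s) (p ! s) (q ! s))) * evT (lams n) (zs n) i c x y)"
      by (rule sum.cong[OF refl]) (rule gc)
    also have "\<dots> = (-1) ^ ((par i + par c) * qc q) * Yent lams zs n c j p q * evT (lams n) (zs n) i c x y"
      unfolding Yent_def by (simp only: sum_distrib_left sum_distrib_right)
    finally show ?thesis .
  qed
  have "Yent lams zs (Suc n) i j (p @ [x]) (q @ [y]) = sum g (chains (Suc n) j i)"
    unfolding Yent_def g_def by (rule refl)
  also have "\<dots> = sum g ((\<lambda>cs. cs @ [i]) ` (chains n j False \<union> chains n j True))"
    by (simp add: chains_Suc_split)
  also have "\<dots> = sum (\<lambda>cs. g (cs @ [i])) (chains n j False) + sum (\<lambda>cs. g (cs @ [i])) (chains n j True)"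
    by (simp add: sum.reindex[OF inj] sum.union_disjoint[OF _ _ disj])
  also have "\<dots> = (\<Sum>c\<in>UNIV. (-1) ^ ((par i + par c) * qc q) * Yent lams zs n c j p q
        * evT (lams n) (zs n) i c x y)"
    by (simp only: UNIV_bool hc) simp
  finally show ?thesis .
qed



lemma neg1_pow_eq:
  assumes "even (a + b)"
  shows "(-1::'a::ring_1) ^ a = (-1) ^ b"
proof (cases "even a")
  case True
  then have "even b" using assms by auto
  then show ?thesis using True by simp
next
  case False
  then have "odd b" using assms by auto
  then show ?thesis using False by simp
qed

lemma qc_append[simp]: "qc (a @ b) = qc a + qc b" by (simp add: qc_def)
lemma qc_Nil[simp]: "qc [] = 0" by (simp add: qc_def)

definition YE :: "((complex \<times> complex) \<times> complex) list \<Rightarrow> bool \<Rightarrow> bool \<Rightarrow> bool list \<Rightarrow> bool list \<Rightarrow> complex fps" where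
  "YE M i j p q = Yent (\<lambda>s. fst (M ! s)) (\<lambda>s. snd (M ! s)) (length M) i j p q"

lemma YE_Nil: "YE [] i j p q = (if i = j then 1 else 0)"
  by (simp add: YE_def Yent_0)

lemma YE_snoc:
  assumes "length p = length M" "length q = length M"
  shows "YE (M @ [m]) i j (p @ [x]) (q @ [y]) =
    (\<Sum>c\<in>UNIV. (-1) ^ ((par i + par c) * qc q) * YE M c j p q * evT (fst m) (snd m) i c x y)"
proof -
  have "YE (M @ [m]) i j (p @ [x]) (q @ [y]) = Yent (\<lambda>s. fst ((M @ [m]) ! s)) (\<lambda>s. snd ((M @ [m]) ! s))
     (Suc (length M)) i j (p @ [x]) (q @ [y])" by (simp add: YE_def)
  also have "\<dots> = (\<Sum>c\<in>UNIV. (-1) ^ ((par i + par c) * qc q) *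
      Yent (\<lambda>s. fst ((M @ [m]) ! s)) (\<lambda>s. snd ((M @ [m]) ! s)) (length M) c j p q
        * evT (fst ((M @ [m]) ! length M)) (snd ((M @ [m]) ! length M)) i c x y)"
    by (rule Yent_snoc[OF assms])
  also have "\<dots> = (\<Sum>c\<in>UNIV. (-1) ^ ((par i + par c) * qc q) * YE M c j p q * evT (fst m) (snd m) i c x y)"
  proof -
    have "Yent (\<lambda>s. fst ((M @ [m]) ! s)) (\<lambda>s. snd ((M @ [m]) ! s)) (length M) c j p q = YE M c j p q" for c
      unfolding YE_def by (rule Yent_cong) (simp add: nth_append)
    then show ?thesis by simp
  qed
  finally show ?thesis .
qed

lemma sum_bool_delta1: "(\<Sum>c\<in>UNIV. f c * (if (c::bool) = j then 1 else 0)) = (f j :: 'a::semiring_1)"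
  by (cases j) (simp_all add: UNIV_bool)

lemma sum_bool_delta2: "(\<Sum>c\<in>UNIV. (if (c::bool) = j then 1 else 0) * f c) = (f j :: 'a::semiring_1)"
  by (cases j) (simp_all add: UNIV_bool)

lemma YE_single: "YE [m] i j [x] [y] = evT (fst m) (snd m) i j x y"
proof -
  have "YE ([] @ [m]) i j ([] @ [x]) ([] @ [y]) =
    (\<Sum>c\<in>UNIV. (-1) ^ ((par i + par c) * qc []) * YE [] c j [] [] * evT (fst m) (snd m) i c x y)"
    by (rule YE_snoc) simp_all
  also have "\<dots> = (\<Sum>c\<in>UNIV. (if c = j then 1 else 0) * evT (fst m) (snd m) i c x y)"
    by (simp add: YE_Nil)
  also have "\<dots> = evT (fst m) (snd m) i j x y" by (rule sum_bool_delta2)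
  finally show ?thesis by simp
qed

lemma YE_append:
  assumes "length p1 = length M1" "length q1 = length M1" "length p2 = length M2" "length q2 = length M2"
  shows "YE (M1 @ M2) i j (p1 @ p2) (q1 @ q2) =
    (\<Sum>c\<in>UNIV. (-1) ^ ((par i + par c) * qc q1) * YE M1 c j p1 q1 * YE M2 i c p2 q2)"
  using assms(3,4)
proof (induction M2 arbitrary: i p2 q2 rule: rev_induct)
  case Nil
  then have "p2 = []" "q2 = []" by auto
  then have "(\<Sum>c\<in>UNIV. (-1) ^ ((par i + par c) * qc q1) * YE M1 c j p1 q1 * YE [] i c p2 q2)
      = (\<Sum>c\<in>UNIV. ((-1) ^ ((par i + par c) * qc q1) * YE M1 c j p1 q1) * (if c = i then 1 else 0))"
    by (intro sum.cong refl) (auto simp: YE_Nil)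
  also have "\<dots> = YE M1 i j p1 q1"
    by (simp only: sum_bool_delta1) (simp add: mult_2[symmetric])
  finally show ?case using \<open>p2 = []\<close> \<open>q2 = []\<close> by simp
next
  case (snoc m M2 i p2 q2)
  obtain p2' x where p2: "p2 = p2' @ [x]" "length p2' = length M2"
    using snoc.prems by (cases p2 rule: rev_cases) auto
  obtain q2' y where q2: "q2 = q2' @ [y]" "length q2' = length M2"
    using snoc.prems by (cases q2 rule: rev_cases) auto
  let ?E = "\<lambda>c. evT (fst m) (snd m) i c x y"
  let ?s = "\<lambda>e. (-1::complex fps) ^ e"
  have "YE (M1 @ M2 @ [m]) i j (p1 @ p2) (q1 @ q2) = YE ((M1 @ M2) @ [m]) i j ((p1 @ p2') @ [x]) ((q1 @ q2') @ [y])"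
    using p2 q2 by simp
  also have "\<dots> = (\<Sum>c\<in>UNIV. ?s ((par i + par c) * qc (q1 @ q2')) * YE (M1 @ M2) c j (p1 @ p2') (q1 @ q2') * ?E c)"
    by (rule YE_snoc) (use assms p2 q2 in simp_all)
  also have "\<dots> = (\<Sum>c\<in>UNIV. ?s ((par i + par c) * qc (q1 @ q2')) *
      (\<Sum>d\<in>UNIV. ?s ((par c + par d) * qc q1) * YE M1 d j p1 q1 * YE M2 c d p2' q2') * ?E c)"
    using snoc.IH[OF p2(2) q2(2)] by simp
  also have "\<dots> = (\<Sum>c\<in>UNIV. \<Sum>d\<in>UNIV. ?s ((par i + par c) * qc (q1 @ q2')) *
      (?s ((par c + par d) * qc q1) * YE M1 d j p1 q1 * YE M2 c d p2' q2') * ?E c)"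
    by (simp add: sum_distrib_left sum_distrib_right)
  also have "\<dots> = (\<Sum>c\<in>UNIV. \<Sum>d\<in>UNIV. ?s ((par i + par d) * qc q1) * YE M1 d j p1 q1 *
      (?s ((par i + par c) * qc q2') * YE M2 c d p2' q2' * ?E c))"
  proof (intro sum.cong refl)
    fix c d
    have ev: "even ((par i + par c) * qc (q1 @ q2') + (par c + par d) * qc q1 +
        ((par i + par d) * qc q1 + (par i + par c) * qc q2'))"
    proof -
      have "(par i + par c) * qc (q1 @ q2') + (par c + par d) * qc q1 +
        ((par i + par d) * qc q1 + (par i + par c) * qc q2') = 2 * ((par i + par c) * qc q2' + qc q1 * (par i + par c + par d))"
        by (simp add: algebra_simps)
      then show ?thesis by (metis dvd_triv_left)
    qed
    have "?s ((par i + par c) * qc (q1 @ q2')) * ?s ((par c + par d) * qc q1) =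
        ?s ((par i + par d) * qc q1) * ?s ((par i + par c) * qc q2')"
      unfolding power_add[symmetric] by (rule neg1_pow_eq) (use ev in \<open>simp add: add.assoc\<close>)
    then show "?s ((par i + par c) * qc (q1 @ q2')) *
      (?s ((par c + par d) * qc q1) * YE M1 d j p1 q1 * YE M2 c d p2' q2') * ?E c =
      ?s ((par i + par d) * qc q1) * YE M1 d j p1 q1 *
      (?s ((par i + par c) * qc q2') * YE M2 c d p2' q2' * ?E c)"
      by (simp add: mult_ac)
  qed
  also have "\<dots> = (\<Sum>d\<in>UNIV. ?s ((par i + par d) * qc q1) * YE M1 d j p1 q1 *
      (\<Sum>c\<in>UNIV. ?s ((par i + par c) * qc q2') * YE M2 c d p2' q2' * ?E c))"
    by (subst sum.swap) (simp add: sum_distrib_left)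
  also have "\<dots> = (\<Sum>d\<in>UNIV. ?s ((par i + par d) * qc q1) * YE M1 d j p1 q1 * YE (M2 @ [m]) i d p2 q2)"
    using YE_snoc[OF p2(2) q2(2)] p2 q2 by simp
  finally show ?case .
qed



type_synonym modl = "((complex \<times> complex) \<times> complex) list"
type_synonym matr = "bool list \<Rightarrow> bool list \<Rightarrow> complex"

lemma fps_const_sum: "fps_const (sum f S) = (\<Sum>x\<in>S. fps_const (f x))"
  by (induct S rule: infinite_finite_induct) (simp_all add: fps_const_add[symmetric] del: fps_const_add)

lemma basis_mem[simp]: "t \<in> basis n \<longleftrightarrow> length t = n" by (simp add: basis_def)

lemma sum_basis_append:
  "(\<Sum>t\<in>basis (n1 + n2). h t) = (\<Sum>t1\<in>basis n1. \<Sum>t2\<in>basis n2. h (t1 @ t2))"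
proof -
  have eq: "basis (n1 + n2) = (\<lambda>(x, y). x @ y) ` (basis n1 \<times> basis n2)"
  proof (intro set_eqI iffI)
    fix t assume "t \<in> basis (n1 + n2)"
    then have "t = take n1 t @ drop n1 t" "take n1 t \<in> basis n1" "drop n1 t \<in> basis n2" by auto
    then show "t \<in> (\<lambda>(x, y). x @ y) ` (basis n1 \<times> basis n2)" by (metis (no_types, lifting) SigmaI case_prod_conv image_eqI)
  qed auto
  have inj: "inj_on (\<lambda>(x, y). x @ y) (basis n1 \<times> basis n2)"
    by (auto simp: inj_on_def)
  have "(\<Sum>t\<in>basis (n1 + n2). h t) = (\<Sum>z\<in>basis n1 \<times> basis n2. h (fst z @ snd z))"
    unfolding eq by (subst sum.reindex[OF inj]) (simp add: case_prod_beta)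
  also have "\<dots> = (\<Sum>t1\<in>basis n1. \<Sum>t2\<in>basis n2. h (t1 @ t2))"
    by (simp add: sum.cartesian_product case_prod_beta)
  finally show ?thesis .
qed

lemma triple_sum:
  fixes f :: "'c \<Rightarrow> 'd::comm_semiring_1"
  shows "(\<Sum>t1\<in>S1. \<Sum>t2\<in>S2. \<Sum>c\<in>C. f c * g c t1 * h c t2) = (\<Sum>c\<in>C. f c * sum (g c) S1 * sum (h c) S2)"
proof -
  have "f c * sum (g c) S1 * sum (h c) S2 = (\<Sum>t1\<in>S1. \<Sum>t2\<in>S2. f c * g c t1 * h c t2)" for c
  proof -
    have "f c * sum (g c) S1 * sum (h c) S2 = (\<Sum>t1\<in>S1. f c * g c t1) * sum (h c) S2"
      by (simp add: sum_distrib_left)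
    also have "\<dots> = (\<Sum>t1\<in>S1. \<Sum>t2\<in>S2. f c * g c t1 * h c t2)" by (rule sum_product)
    finally show ?thesis .
  qed
  then have "(\<Sum>c\<in>C. f c * sum (g c) S1 * sum (h c) S2) = (\<Sum>c\<in>C. \<Sum>t1\<in>S1. \<Sum>t2\<in>S2. f c * g c t1 * h c t2)"
    by simp
  also have "\<dots> = (\<Sum>t1\<in>S1. \<Sum>c\<in>C. \<Sum>t2\<in>S2. f c * g c t1 * h c t2)" by (rule sum.swap)
  also have "\<dots> = (\<Sum>t1\<in>S1. \<Sum>t2\<in>S2. \<Sum>c\<in>C. f c * g c t1 * h c t2)"
    by (rule sum.cong[OF refl]) (rule sum.swap)
  finally show ?thesis by simp
qed

definition isHom :: "modl \<Rightarrow> modl \<Rightarrow> matr \<Rightarrow> bool" where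
  "isHom A B F \<longleftrightarrow> (\<forall>p q. F p q \<noteq> 0 \<longrightarrow> length p = length B \<and> length q = length A \<and> (even (qc p) \<longleftrightarrow> even (qc q))) \<and>
   (\<forall>i j p q. length p = length B \<longrightarrow> length q = length A \<longrightarrow>
     (\<Sum>t\<in>basis (length B). YE B i j p t * fps_const (F t q)) = (\<Sum>t\<in>basis (length A). fps_const (F p t) * YE A i j t q))"

definition tens :: "nat \<Rightarrow> nat \<Rightarrow> matr \<Rightarrow> matr \<Rightarrow> matr" where
  "tens nA nB F G = (\<lambda>p q. F (take nB p) (take nA q) * G (drop nB p) (drop nA q))"

definition compM :: "nat \<Rightarrow> matr \<Rightarrow> matr \<Rightarrow> matr" where
  "compM nB G F = (\<lambda>p q. \<Sum>t\<in>basis nB. G p t * F t q)"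

definition idM :: "nat \<Rightarrow> matr" where
  "idM n = (\<lambda>p q. if p = q \<and> length q = n then 1 else 0)"

lemma isHomD1: "isHom A B F \<Longrightarrow> F p q \<noteq> 0 \<Longrightarrow> length p = length B \<and> length q = length A \<and> (even (qc p) \<longleftrightarrow> even (qc q))"
  unfolding isHom_def by simp

lemma isHomD2: "isHom A B F \<Longrightarrow> length p = length B \<Longrightarrow> length q = length A \<Longrightarrow>
     (\<Sum>t\<in>basis (length B). YE B i j p t * fps_const (F t q)) = (\<Sum>t\<in>basis (length A). fps_const (F p t) * YE A i j t q)"
  unfolding isHom_def by simp

lemma isHom_id: "isHom A A (idM (length A))"
proof -
  have "(\<Sum>t\<in>basis (length A). YE A i j p t * fps_const (idM (length A) t q)) = YE A i j p q"
    if "length q = length A" for i j p q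
  proof -
    have "(\<Sum>t\<in>basis (length A). YE A i j p t * fps_const (idM (length A) t q)) =
      (\<Sum>t\<in>basis (length A). if t = q then YE A i j p t else 0)"
      by (rule sum.cong) (auto simp: idM_def)
    then show ?thesis using that by (simp add: sum.delta)
  qed
  moreover have "(\<Sum>t\<in>basis (length A). fps_const (idM (length A) p t) * YE A i j t q) = YE A i j p q"
    if "length p = length A" for i j p q
  proof -
    have "(\<Sum>t\<in>basis (length A). fps_const (idM (length A) p t) * YE A i j t q) =
      (\<Sum>t\<in>basis (length A). if t = p then YE A i j t q else 0)"
      by (rule sum.cong) (auto simp: idM_def)
    then show ?thesis using that by (simp add: sum.delta)
  qed
  moreover have "idM (length A) p q \<noteq> 0 \<Longrightarrow> length p = length A \<and> length q = length A \<and> (even (qc p) \<longleftrightarrow> even (qc q))" for p q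
    by (simp add: idM_def split: if_splits)
  ultimately show ?thesis unfolding isHom_def by simp
qed

lemma isHom_comp:
  assumes F: "isHom A B F" and G: "isHom B C G"
  shows "isHom A C (compM (length B) G F)"
proof -
  have supp: "length p = length C \<and> length q = length A \<and> (even (qc p) \<longleftrightarrow> even (qc q))"
    if nz: "compM (length B) G F p q \<noteq> 0" for p q
  proof -
    have "\<exists>t\<in>basis (length B). G p t * F t q \<noteq> 0"
      using nz unfolding compM_def by (meson sum.not_neutral_contains_not_neutral)
    then obtain t where "t \<in> basis (length B)" "G p t * F t q \<noteq> 0" by blast
    then have "G p t \<noteq> 0" "F t q \<noteq> 0" by auto
    then have a: "length p = length C \<and> length t = length B \<and> (even (qc p) \<longleftrightarrow> even (qc t))"
      and b: "length t = length B \<and> length q = length A \<and> (even (qc t) \<longleftrightarrow> even (qc q))"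
      using isHomD1[OF G] isHomD1[OF F] by simp_all
    then show ?thesis by simp
  qed
  have comm: "(\<Sum>s\<in>basis (length C). YE C i j p s * fps_const (compM (length B) G F s q))
      = (\<Sum>u\<in>basis (length A). fps_const (compM (length B) G F p u) * YE A i j u q)"
    if p: "length p = length C" and q: "length q = length A" for i j p q
  proof -
    have "(\<Sum>s\<in>basis (length C). YE C i j p s * fps_const (compM (length B) G F s q))
        = (\<Sum>s\<in>basis (length C). \<Sum>t\<in>basis (length B). YE C i j p s * fps_const (G s t) * fps_const (F t q))"
      by (simp add: compM_def fps_const_sum sum_distrib_left mult.assoc)
    also have "\<dots> = (\<Sum>t\<in>basis (length B). (\<Sum>s\<in>basis (length C). YE C i j p s * fps_const (G s t)) * fps_const (F t q))"
      by (subst sum.swap) (simp add: sum_distrib_right)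
    also have "\<dots> = (\<Sum>t\<in>basis (length B). (\<Sum>s\<in>basis (length B). fps_const (G p s) * YE B i j s t) * fps_const (F t q))"
      by (rule sum.cong[OF refl]) (simp add: isHomD2[OF G p])
    also have "\<dots> = (\<Sum>s\<in>basis (length B). fps_const (G p s) * (\<Sum>t\<in>basis (length B). YE B i j s t * fps_const (F t q)))"
      by (simp only: sum_distrib_right sum_distrib_left mult.assoc) (rule sum.swap)
    also have "\<dots> = (\<Sum>s\<in>basis (length B). fps_const (G p s) * (\<Sum>u\<in>basis (length A). fps_const (F s u) * YE A i j u q))"
      by (rule sum.cong[OF refl]) (simp add: isHomD2[OF F _ q])
    also have "\<dots> = (\<Sum>u\<in>basis (length A). fps_const (compM (length B) G F p u) * YE A i j u q)"
      unfolding compM_def fps_const_sum fps_const_mult[symmetric]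
      by (simp only: sum_distrib_right sum_distrib_left mult.assoc) (rule sum.swap)
    finally show ?thesis .
  qed
  show ?thesis unfolding isHom_def
  proof (intro conjI allI impI)
    fix p q :: "bool list" assume "compM (length B) G F p q \<noteq> 0"
    then show "length p = length C" "length q = length A" "(even (qc p) \<longleftrightarrow> even (qc q))"
      using supp by simp_all
  next
    fix i j :: bool and p q :: "bool list" assume "length p = length C" "length q = length A"
    then show "(\<Sum>t\<in>basis (length C). YE C i j p t * fps_const (compM (length B) G F t q)) =
      (\<Sum>t\<in>basis (length A). fps_const (compM (length B) G F p t) * YE A i j t q)"
      by (rule comm)
  qed
qed



lemma qc_take_drop: "qc p = qc (take n p) + qc (drop n p)"
  by (metis append_take_drop_id qc_append)

lemma sign_par_eq:
  assumes "even x \<longleftrightarrow> even y"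
  shows "(-1::'a::ring_1) ^ (a * x) = (-1) ^ (a * y)"
proof (rule neg1_pow_eq)
  have "a * x + a * y = a * (x + y)" by (simp add: algebra_simps)
  moreover have "even (x + y)" using assms by auto
  ultimately show "even (a * x + a * y)" by simp
qed

lemma isHom_tens:
  assumes F: "isHom A1 B1 F" and G: "isHom A2 B2 G"
  shows "isHom (A1 @ A2) (B1 @ B2) (tens (length A1) (length B1) F G)"
proof -
  let ?T = "tens (length A1) (length B1) F G"
  have supp: "length p = length (B1 @ B2) \<and> length q = length (A1 @ A2) \<and> (even (qc p) \<longleftrightarrow> even (qc q))"
    if nz: "?T p q \<noteq> 0" for p q
  proof -
    have nzF: "F (take (length B1) p) (take (length A1) q) \<noteq> 0" and nzG: "G (drop (length B1) p) (drop (length A1) q) \<noteq> 0"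
      using nz by (auto simp: tens_def)
    have a: "length (take (length B1) p) = length B1 \<and> length (take (length A1) q) = length A1 \<and>
        (even (qc (take (length B1) p)) \<longleftrightarrow> even (qc (take (length A1) q)))"
      and b: "length (drop (length B1) p) = length B2 \<and> length (drop (length A1) q) = length A2 \<and>
        (even (qc (drop (length B1) p)) \<longleftrightarrow> even (qc (drop (length A1) q)))"
      by (rule isHomD1[OF F nzF], rule isHomD1[OF G nzG])
    have "length p = length (B1 @ B2)" "length q = length (A1 @ A2)" using a b by auto
    moreover have "even (qc p) \<longleftrightarrow> even (qc q)"
      using a b qc_take_drop[of p "length B1"] qc_take_drop[of q "length A1"] by auto
    ultimately show ?thesis by simp
  qed
  have comm: "(\<Sum>t\<in>basis (length (B1 @ B2)). YE (B1 @ B2) i j p t * fps_const (?T t q)) =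
      (\<Sum>t\<in>basis (length (A1 @ A2)). fps_const (?T p t) * YE (A1 @ A2) i j t q)"
    if lp: "length p = length (B1 @ B2)" and lq: "length q = length (A1 @ A2)" for i j p q
  proof -
    define p1 where "p1 = take (length B1) p"
    define p2 where "p2 = drop (length B1) p"
    define q1 where "q1 = take (length A1) q"
    define q2 where "q2 = drop (length A1) q"
    have pp: "p = p1 @ p2" "length p1 = length B1" "length p2 = length B2"
      using lp by (simp_all add: p1_def p2_def)
    have qq: "q = q1 @ q2" "length q1 = length A1" "length q2 = length A2"
      using lq by (simp_all add: q1_def q2_def)
    define sg where "sg c = (-1::complex fps) ^ ((par i + par c) * qc q1)" for c
    have L1: "(\<Sum>t\<in>basis (length (B1 @ B2)). YE (B1 @ B2) i j p t * fps_const (?T t q)) =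
      (\<Sum>t1\<in>basis (length B1). \<Sum>t2\<in>basis (length B2). YE (B1 @ B2) i j (p1 @ p2) (t1 @ t2) * fps_const (F t1 q1 * G t2 q2))"
      unfolding length_append sum_basis_append
      by (intro sum.cong refl) (simp add: tens_def pp(1) q1_def q2_def)
    also have "\<dots> = (\<Sum>t1\<in>basis (length B1). \<Sum>t2\<in>basis (length B2). \<Sum>c\<in>UNIV.
        sg c * (YE B1 c j p1 t1 * fps_const (F t1 q1)) * (YE B2 i c p2 t2 * fps_const (G t2 q2)))"
    proof (intro sum.cong refl)
      fix t1 t2 assume t1: "t1 \<in> basis (length B1)" and t2: "t2 \<in> basis (length B2)"
      show "YE (B1 @ B2) i j (p1 @ p2) (t1 @ t2) * fps_const (F t1 q1 * G t2 q2) =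
        (\<Sum>c\<in>UNIV. sg c * (YE B1 c j p1 t1 * fps_const (F t1 q1)) * (YE B2 i c p2 t2 * fps_const (G t2 q2)))"
      proof (cases "F t1 q1 = 0")
        case True then show ?thesis by simp
      next
        case False
        then have par: "even (qc t1) \<longleftrightarrow> even (qc q1)" using isHomD1[OF F] by blast
        have "YE (B1 @ B2) i j (p1 @ p2) (t1 @ t2) =
          (\<Sum>c\<in>UNIV. (-1) ^ ((par i + par c) * qc t1) * YE B1 c j p1 t1 * YE B2 i c p2 t2)"
          by (rule YE_append) (use pp t1 t2 in simp_all)
        also have "\<dots> = (\<Sum>c\<in>UNIV. sg c * YE B1 c j p1 t1 * YE B2 i c p2 t2)"
          unfolding sg_def by (simp only: sign_par_eq[OF par, where 'a="complex fps"])
        finally show ?thesis by (simp add: sum_distrib_left sum_distrib_right mult_ac fps_const_mult[symmetric] del: fps_const_mult)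
      qed
    qed
    also have "\<dots> = (\<Sum>c\<in>UNIV. sg c * (\<Sum>t1\<in>basis (length B1). YE B1 c j p1 t1 * fps_const (F t1 q1))
        * (\<Sum>t2\<in>basis (length B2). YE B2 i c p2 t2 * fps_const (G t2 q2)))"
      by (rule triple_sum)
    also have "\<dots> = (\<Sum>c\<in>UNIV. sg c * (\<Sum>t1\<in>basis (length A1). fps_const (F p1 t1) * YE A1 c j t1 q1)
        * (\<Sum>t2\<in>basis (length A2). fps_const (G p2 t2) * YE A2 i c t2 q2))"
      by (simp add: isHomD2[OF F pp(2) qq(2)] isHomD2[OF G pp(3) qq(3)])
    also have "\<dots> = (\<Sum>t1\<in>basis (length A1). \<Sum>t2\<in>basis (length A2). \<Sum>c\<in>UNIV.
        sg c * (fps_const (F p1 t1) * YE A1 c j t1 q1) * (fps_const (G p2 t2) * YE A2 i c t2 q2))"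
      by (rule triple_sum[symmetric])
    also have "\<dots> = (\<Sum>t1\<in>basis (length A1). \<Sum>t2\<in>basis (length A2).
        fps_const (F p1 t1 * G p2 t2) * YE (A1 @ A2) i j (t1 @ t2) (q1 @ q2))"
    proof (intro sum.cong refl)
      fix t1 t2 assume t1: "t1 \<in> basis (length A1)" and t2: "t2 \<in> basis (length A2)"
      have "YE (A1 @ A2) i j (t1 @ t2) (q1 @ q2) =
          (\<Sum>c\<in>UNIV. sg c * YE A1 c j t1 q1 * YE A2 i c t2 q2)"
        unfolding sg_def by (rule YE_append) (use qq t1 t2 in simp_all)
      then show "(\<Sum>c\<in>UNIV. sg c * (fps_const (F p1 t1) * YE A1 c j t1 q1) * (fps_const (G p2 t2) * YE A2 i c t2 q2)) =
        fps_const (F p1 t1 * G p2 t2) * YE (A1 @ A2) i j (t1 @ t2) (q1 @ q2)"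
        by (simp add: sum_distrib_left mult_ac fps_const_mult[symmetric] del: fps_const_mult)
    qed
    also have "\<dots> = (\<Sum>t\<in>basis (length (A1 @ A2)). fps_const (?T p t) * YE (A1 @ A2) i j t q)"
      unfolding length_append sum_basis_append
      by (intro sum.cong refl) (simp add: tens_def qq(1) p1_def p2_def)
    finally show ?thesis .
  qed
  show ?thesis unfolding isHom_def
  proof (intro conjI allI impI)
    fix p q :: "bool list" assume "?T p q \<noteq> 0"
    then show "length p = length (B1 @ B2)" "length q = length (A1 @ A2)" "(even (qc p) \<longleftrightarrow> even (qc q))"
      using supp by simp_all
  next
    fix i j :: bool and p q :: "bool list" assume "length p = length (B1 @ B2)" "length q = length (A1 @ A2)"
    then show "(\<Sum>t\<in>basis (length (B1 @ B2)). YE (B1 @ B2) i j p t * fps_const (?T t q)) =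
      (\<Sum>t\<in>basis (length (A1 @ A2)). fps_const (?T p t) * YE (A1 @ A2) i j t q)"
      by (rule comm)
  qed
qed



definition Eg :: "complex \<Rightarrow> complex fps" where "Eg z = Abs_fps (\<lambda>m. z ^ m)"

lemma Eg_rel: "(1 - fps_const z * fps_X) * Eg z = 1"
proof (rule fps_ext)
  fix n
  show "fps_nth ((1 - fps_const z * fps_X) * Eg z) n = fps_nth 1 n"
    by (cases n) (simp_all add: algebra_simps Eg_def mult_ac)
qed

lemma uw_rel: "fps_const x * (fps_X * Eg x) * (fps_X * Eg y) - fps_const y * (fps_X * Eg x) * (fps_X * Eg y)
   = fps_X * Eg x - fps_X * Eg y"
proof -
  have h1: "(1 - fps_const x * fps_X) * Eg x = 1" and h2: "(1 - fps_const y * fps_X) * Eg y = 1" by (rule Eg_rel)+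
  from h1 h2 show ?thesis by algebra
qed

lemma evT_eq: "evT lam z a b p q = fps_const (if a = b \<and> p = q then 1 else 0) +
    fps_const ((-1) ^ par b * glE lam b a p q) * (fps_X * Eg z)"
proof (rule fps_ext)
  fix n
  show "fps_nth (evT lam z a b p q) n = fps_nth (fps_const (if a = b \<and> p = q then 1 else 0) +
    fps_const ((-1) ^ par b * glE lam b a p q) * (fps_X * Eg z)) n"
    by (cases n) (simp_all add: evT_def Eg_def)
qed

lemma YE2: "YE [m1, m2] i j [a1, a2] [b1, b2] =
   (\<Sum>c\<in>UNIV. (-1) ^ ((par i + par c) * par b1) * evT (fst m1) (snd m1) c j a1 b1 * evT (fst m2) (snd m2) i c a2 b2)"
proof -
  have "YE ([m1] @ [m2]) i j ([a1] @ [a2]) ([b1] @ [b2]) =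
    (\<Sum>c\<in>UNIV. (-1) ^ ((par i + par c) * qc [b1]) * YE [m1] c j [a1] [b1] * YE [m2] i c [a2] [b2])"
    by (rule YE_append) simp_all
  then show ?thesis by (simp add: YE_single qc_def par_def)
qed

lemma basis2: "basis 2 = {[False, False], [False, True], [True, False], [True, True]}"
  by (auto simp: basis_def length_Suc_conv numeral_2_eq_2)

definition Smat :: "complex \<Rightarrow> matr" where
 "Smat d p q = (if p = [False,False] \<and> q = [False,False] then 1 + d
   else if p = [False,True] \<and> q = [False,True] then 1
   else if p = [False,True] \<and> q = [True,False] then d
   else if p = [True,False] \<and> q = [False,True] then d
   else if p = [True,False] \<and> q = [True,False] then 1
   else if p = [True,True] \<and> q = [True,True] then 1 - d else 0)"

lemma len2: "length p = 2 \<Longrightarrow> \<exists>a b. p = [a, b]"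
  by (auto simp: length_Suc_conv numeral_2_eq_2)

lemmas fsimps = fps_const_add[symmetric] fps_const_sub[symmetric] fps_const_mult[symmetric] fps_const_neg[symmetric]

lemma swap_comm:
  fixes i j p1 p2 q1 q2 :: bool
  shows "(\<Sum>t\<in>basis 2. YE [((1,0),x),((1,0),y)] i j [p1,p2] t * fps_const (Smat (y - x) t [q1,q2])) =
      (\<Sum>t\<in>basis 2. fps_const (Smat (y - x) [p1,p2] t) * YE [((1,0),y),((1,0),x)] i j t [q1,q2])"
  using uw_rel[of x y]
  apply (cases i; cases j; cases p1; cases p2; cases q1; cases q2)
  apply (simp_all add: basis2 YE2 evT_eq glE_def par_def Smat_def UNIV_bool fsimps
      del: fps_const_add fps_const_sub fps_const_mult fps_const_neg)
  apply (algebra | (rule disjI2, algebra))+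
  done

definition Pmat :: "nat \<Rightarrow> matr" where
 "Pmat l p q = (if p = [False] \<and> q = [False,False] then of_nat l + 1
   else if p = [True] \<and> q = [False,True] then 1
   else if p = [True] \<and> q = [True,False] then of_nat l else 0)"

lemma basis1: "basis (Suc 0) = {[False], [True]}"
  by (auto simp: basis_def length_Suc_conv)

lemma fus_comm:
  fixes i j p1 q1 q2 :: bool
  shows "(\<Sum>t\<in>basis 1. YE [((of_nat l + 1, 0), z)] i j [p1] t * fps_const (Pmat l t [q1,q2])) =
      (\<Sum>t\<in>basis 2. fps_const (Pmat l [p1] t) * YE [((of_nat l, 0), z), ((1, 0), z - of_nat l)] i j t [q1,q2])"
  using uw_rel[of z "z - of_nat l"] Eg_rel[of z] Eg_rel[of "z - of_nat l"]
  apply (cases i; cases j; cases p1; cases q1; cases q2)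
  apply (simp_all add: basis1 basis2 YE2 YE_single evT_eq glE_def par_def Pmat_def UNIV_bool fsimps
      del: fps_const_add fps_const_sub fps_const_mult fps_const_neg)
  apply (algebra | (rule disjI2, algebra))+
  done

lemma swap_hom: "isHom [((1,0),y),((1,0),x)] [((1,0),x),((1,0),y)] (Smat (y - x))"
  unfolding isHom_def
proof (intro conjI allI impI)
  fix p q :: "bool list" assume nz: "Smat (y - x) p q \<noteq> 0"
  then have "(p = [False,False] \<and> q = [False,False]) \<or> (p = [False,True] \<and> q = [False,True]) \<or>
     (p = [False,True] \<and> q = [True,False]) \<or> (p = [True,False] \<and> q = [False,True]) \<or>
     (p = [True,False] \<and> q = [True,False]) \<or> (p = [True,True] \<and> q = [True,True])"
    unfolding Smat_def by (simp split: if_splits)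
  then show "length p = length [((1::complex, 0::complex), x), ((1, 0), y)]"
    "length q = length [((1::complex, 0::complex), y), ((1, 0), x)]" "even (qc p) = even (qc q)"
    by (auto simp: qc_def)
next
  fix i j :: bool and p q :: "bool list"
  assume lp: "length p = length [((1::complex, 0::complex), x), ((1, 0), y)]"
    and lq: "length q = length [((1::complex, 0::complex), y), ((1, 0), x)]"
  obtain p1 p2 where p: "p = [p1, p2]" using len2[of p] lp by auto
  obtain q1 q2 where q: "q = [q1, q2]" using len2[of q] lq by auto
  note pq = p q
  have l2: "length [((1::complex, 0::complex), x), ((1, 0), y)] = 2" "length [((1::complex, 0::complex), y), ((1, 0), x)] = 2"
    by simp_all
  show "(\<Sum>t\<in>basis (length [((1::complex, 0::complex), x), ((1, 0), y)]). YE [((1, 0), x), ((1, 0), y)] i j p t * fps_const (Smat (y - x) t q)) =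
       (\<Sum>t\<in>basis (length [((1::complex, 0::complex), y), ((1, 0), x)]). fps_const (Smat (y - x) p t) * YE [((1, 0), y), ((1, 0), x)] i j t q)"
    unfolding l2 pq by (rule swap_comm)
qed

lemma fus_hom: "isHom [((of_nat l, 0), z), ((1, 0), z - of_nat l)] [((of_nat l + 1, 0), z)] (Pmat l)"
  unfolding isHom_def
proof (intro conjI allI impI)
  fix p q :: "bool list" assume nz: "Pmat l p q \<noteq> 0"
  then have "(p = [False] \<and> q = [False,False]) \<or> (p = [True] \<and> q = [False,True]) \<or>
     (p = [True] \<and> q = [True,False])"
    unfolding Pmat_def by (simp split: if_splits)
  then show "length p = length [((of_nat l + 1 :: complex, 0 :: complex), z)]"
    "length q = length [((of_nat l :: complex, 0 :: complex), z), ((1, 0), z - of_nat l)]" "even (qc p) = even (qc q)"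
    by (auto simp: qc_def)
next
  fix i j :: bool and p q :: "bool list"
  assume lp: "length p = length [((of_nat l + 1 :: complex, 0 :: complex), z)]"
    and lq: "length q = length [((of_nat l :: complex, 0 :: complex), z), ((1, 0), z - of_nat l)]"
  obtain p1 where p: "p = [p1]" using lp by (auto simp: length_Suc_conv)
  obtain q1 q2 where q: "q = [q1, q2]" using len2[of q] lq by auto
  note pq = p q
  have l2: "length [((of_nat l + 1 :: complex, 0 :: complex), z)] = 1"
     "length [((of_nat l :: complex, 0 :: complex), z), ((1, 0), z - of_nat l)] = 2"
    by simp_all
  show "(\<Sum>t\<in>basis (length [((of_nat l + 1 :: complex, 0 :: complex), z)]). YE [((of_nat l + 1, 0), z)] i j p t * fps_const (Pmat l t q)) =
       (\<Sum>t\<in>basis (length [((of_nat l :: complex, 0 :: complex), z), ((1, 0), z - of_nat l)]). fps_const (Pmat l p t) * YE [((of_nat l, 0), z), ((1, 0), z - of_nat l)] i j t q)"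
    unfolding l2 pq by (rule fus_comm)
qed

definition vacM :: "nat \<Rightarrow> nat \<Rightarrow> matr \<Rightarrow> complex \<Rightarrow> bool" where
  "vacM nA nB F c \<longleftrightarrow> (\<forall>p. F p (replicate nA False) = (if p = replicate nB False then c else 0))"

lemma vac_id: "vacM n n (idM n) 1"
  by (auto simp: vacM_def idM_def)

lemma vac_comp:
  assumes "vacM nA nB F c1" "vacM nB nC G c2"
  shows "vacM nA nC (compM nB G F) (c2 * c1)"
  unfolding vacM_def
proof
  fix p
  have "compM nB G F p (replicate nA False) = (\<Sum>t\<in>basis nB. if t = replicate nB False then G p t * c1 else 0)"
    unfolding compM_def using assms(1) unfolding vacM_def by (intro sum.cong refl) simp
  also have "\<dots> = G p (replicate nB False) * c1" by (simp add: sum.delta)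
  also have "\<dots> = (if p = replicate nC False then c2 * c1 else 0)" using assms(2) unfolding vacM_def by simp
  finally show "compM nB G F p (replicate nA False) = (if p = replicate nC False then c2 * c1 else 0)" .
qed

lemma vac_tens:
  assumes "vacM nA1 nB1 F c1" "vacM nA2 nB2 G c2"
  shows "vacM (nA1 + nA2) (nB1 + nB2) (tens nA1 nB1 F G) (c1 * c2)"
  unfolding vacM_def
proof
  fix p :: "bool list"
  have e: "(take nB1 p = replicate nB1 False \<and> drop nB1 p = replicate nB2 False) \<longleftrightarrow> p = replicate (nB1 + nB2) False"
  proof
    assume "take nB1 p = replicate nB1 False \<and> drop nB1 p = replicate nB2 False"
    then have "p = replicate nB1 False @ replicate nB2 False" by (metis append_take_drop_id)
    then show "p = replicate (nB1 + nB2) False" by (simp add: replicate_add)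
  qed (simp add: replicate_add[symmetric] take_replicate)
  have "tens nA1 nB1 F G p (replicate (nA1 + nA2) False) =
      F (take nB1 p) (replicate nA1 False) * G (drop nB1 p) (replicate nA2 False)"
    by (simp add: tens_def replicate_add)
  also have "\<dots> = (if take nB1 p = replicate nB1 False then c1 else 0) * (if drop nB1 p = replicate nB2 False then c2 else 0)"
    using assms unfolding vacM_def by simp
  also have "\<dots> = (if p = replicate (nB1 + nB2) False then c1 * c2 else 0)"
    using e by (cases "take nB1 p = replicate nB1 False") simp_all
  finally show "tens nA1 nB1 F G p (replicate (nA1 + nA2) False) = (if p = replicate (nB1 + nB2) False then c1 * c2 else 0)" .
qed

lemma vac_swap: "vacM 2 2 (Smat d) (1 + d)"
  by (auto simp: vacM_def Smat_def numeral_2_eq_2)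

lemma vac_fus: "vacM 2 1 (Pmat l) (of_nat l + 1)"
  by (auto simp: vacM_def Pmat_def numeral_2_eq_2)



definition Vl :: "complex list \<Rightarrow> modl" where "Vl a = map (\<lambda>x. ((1, 0), x)) a"

lemma Vl_simps[simp]: "Vl [] = []" "Vl (x # xs) = ((1, 0), x) # Vl xs" "Vl (xs @ ys) = Vl xs @ Vl ys"
  "length (Vl xs) = length xs"
  by (simp_all add: Vl_def)

definition goodHom :: "modl \<Rightarrow> modl \<Rightarrow> bool" where
  "goodHom A B \<longleftrightarrow> (\<exists>F c. isHom A B F \<and> vacM (length A) (length B) F c \<and> c \<noteq> 0)"

lemma good_id: "goodHom A A"
  unfolding goodHom_def
  by (rule exI[of _ "idM (length A)"], rule exI[of _ 1]) (simp add: isHom_id vac_id)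

lemma good_comp: "goodHom A B \<Longrightarrow> goodHom B C \<Longrightarrow> goodHom A C"
  unfolding goodHom_def
proof (elim exE conjE)
  fix F c G d
  assume "isHom A B F" "vacM (length A) (length B) F c" "c \<noteq> 0" "isHom B C G" "vacM (length B) (length C) G d" "d \<noteq> 0"
  then have "isHom A C (compM (length B) G F) \<and> vacM (length A) (length C) (compM (length B) G F) (d * c) \<and> d * c \<noteq> 0"
    using isHom_comp vac_comp by simp
  note H = this
  show "\<exists>F c. isHom A C F \<and> vacM (length A) (length C) F c \<and> c \<noteq> 0"
    by (rule exI[of _ "compM (length B) G F"], rule exI[of _ "d * c"], rule H)
qed

lemma good_tens: "goodHom A1 B1 \<Longrightarrow> goodHom A2 B2 \<Longrightarrow> goodHom (A1 @ A2) (B1 @ B2)"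
  unfolding goodHom_def
proof (elim exE conjE)
  fix F c G d
  assume "isHom A1 B1 F" "vacM (length A1) (length B1) F c" "c \<noteq> 0" "isHom A2 B2 G" "vacM (length A2) (length B2) G d" "d \<noteq> 0"
  then have "isHom (A1 @ A2) (B1 @ B2) (tens (length A1) (length B1) F G) \<and>
     vacM (length (A1 @ A2)) (length (B1 @ B2)) (tens (length A1) (length B1) F G) (c * d) \<and> c * d \<noteq> 0"
    using isHom_tens vac_tens by simp
  note H = this
  show "\<exists>F c. isHom (A1 @ A2) (B1 @ B2) F \<and> vacM (length (A1 @ A2)) (length (B1 @ B2)) F c \<and> c \<noteq> 0"
    by (rule exI[of _ "tens (length A1) (length B1) F G"], rule exI[of _ "c * d"], rule H)
qed

lemma good_swap: "x \<noteq> y + 1 \<Longrightarrow> goodHom [((1,0),y),((1,0),x)] [((1,0),x),((1,0),y)]"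
  unfolding goodHom_def
proof -
  assume "x \<noteq> y + 1"
  then have N: "1 + (y - x) \<noteq> 0"
  proof (intro notI)
    assume "1 + (y - x) = 0"
    have "x = (y + 1) - (1 + (y - x))" by (simp add: algebra_simps)
    also have "\<dots> = y + 1" using \<open>1 + (y - x) = 0\<close> by simp
    finally show False using \<open>x \<noteq> y + 1\<close> by simp
  qed
  moreover have V: "vacM (length [((1::complex,0::complex),y),((1,0),x)]) (length [((1::complex,0::complex),x),((1,0),y)]) (Smat (y - x)) (1 + (y - x))"
    using vac_swap[of "y - x"] by (simp add: numeral_2_eq_2)
  show "\<exists>F c. isHom [((1,0),y),((1,0),x)] [((1,0),x),((1,0),y)] F \<and>
     vacM (length [((1::complex,0::complex),y),((1,0),x)]) (length [((1::complex,0::complex),x),((1,0),y)]) F c \<and> c \<noteq> 0"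
    by (rule exI[of _ "Smat (y - x)"], rule exI[of _ "1 + (y - x)"]) (simp only: swap_hom V N simp_thms)
qed

lemma good_fus: "goodHom [((of_nat l, 0), z), ((1, 0), z - of_nat l)] [((of_nat l + 1, 0), z)]"
  unfolding goodHom_def
proof -
  have V: "vacM (length [((of_nat l :: complex, 0 :: complex), z), ((1, 0), z - of_nat l)]) (length [((of_nat l + 1 :: complex, 0 :: complex), z)]) (Pmat l) (of_nat l + 1)"
    using vac_fus[of l] by (simp add: numeral_2_eq_2)
  moreover have N: "(of_nat l + 1 :: complex) \<noteq> 0"
  proof -
    have "(of_nat l + 1 :: complex) = of_nat (Suc l)" by simp
    also have "\<dots> \<noteq> 0" by (rule of_nat_neq_0)
    finally show ?thesis .
  qed
  show "\<exists>F c. isHom [((of_nat l, 0), z), ((1, 0), z - of_nat l)] [((of_nat l + 1, 0), z)] F \<and>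
     vacM (length [((of_nat l :: complex, 0 :: complex), z), ((1, 0), z - of_nat l)]) (length [((of_nat l + 1 :: complex, 0 :: complex), z)]) F c \<and> c \<noteq> 0"
    by (rule exI[of _ "Pmat l"], rule exI[of _ "of_nat l + 1"]) (simp only: fus_hom V N simp_thms)
qed

lemma good_move:
  assumes "\<forall>y\<in>set u1. x \<noteq> y + 1"
  shows "goodHom (Vl (u1 @ x # u2)) (Vl (x # u1 @ u2))"
  using assms
proof (induction u1)
  case Nil
  then show ?case using good_id by simp
next
  case (Cons y u1)
  have ih: "goodHom (Vl (u1 @ x # u2)) (Vl (x # u1 @ u2))" using Cons.IH Cons.prems by simp
  have g1: "goodHom (Vl [y] @ Vl (u1 @ x # u2)) (Vl [y] @ Vl (x # u1 @ u2))"
    by (rule good_tens[OF good_id ih])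
  have g1': "goodHom (Vl (y # u1 @ x # u2)) ([((1,0),y),((1,0),x)] @ Vl (u1 @ u2))"
    using g1 by simp
  have sw: "goodHom [((1,0),y),((1,0),x)] [((1,0),x),((1,0),y)]"
    by (rule good_swap) (use Cons.prems in simp)
  have g2: "goodHom ([((1,0),y),((1,0),x)] @ Vl (u1 @ u2)) ([((1,0),x),((1,0),y)] @ Vl (u1 @ u2))"
    by (rule good_tens[OF sw good_id])
  have "goodHom (Vl (y # u1 @ x # u2)) ([((1,0),x),((1,0),y)] @ Vl (u1 @ u2))"
    by (rule good_comp[OF g1' g2])
  then show ?case by simp
qed

lemma good_perm:
  assumes "mset u = mset w" "sorted_wrt (\<lambda>a b. b \<noteq> a + 1) u"
  shows "goodHom (Vl u) (Vl w)"
  using assms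
proof (induction w arbitrary: u)
  case Nil
  then show ?case using good_id by simp
next
  case (Cons x w)
  have "set u = set (x # w)" using Cons.prems(1) by (rule mset_eq_setD)
  then have "x \<in> set u" by simp
  then obtain u1 u2 where u: "u = u1 @ x # u2" using split_list[of x u] by blast
  have s: "sorted_wrt (\<lambda>a b. b \<noteq> a + 1) (u1 @ x # u2)" using Cons.prems(2) u by simp
  then have cross: "\<forall>y\<in>set u1. x \<noteq> y + 1" by (simp add: sorted_wrt_append)
  have s2: "sorted_wrt (\<lambda>a b. b \<noteq> a + 1) (u1 @ u2)" using s by (simp add: sorted_wrt_append)
  have m: "mset (u1 @ u2) = mset w" using Cons.prems(1) u by simp
  have g1: "goodHom (Vl u) (Vl (x # u1 @ u2))" using good_move[OF cross] u by simp
  have g2: "goodHom (Vl [x] @ Vl (u1 @ u2)) (Vl [x] @ Vl w)" using good_tens[OF good_id Cons.IH[OF m s2]] .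
  show ?case using good_comp[OF g1] g2 by simp
qed

definition blk :: "complex \<Rightarrow> nat \<Rightarrow> complex list" where
  "blk z l = map (\<lambda>m. z - of_nat m) [0..<l]"

lemma good_block: "0 < l \<Longrightarrow> goodHom (Vl (blk z l)) [((of_nat l, 0), z)]"
proof (induction l)
  case 0 then show ?case by simp
next
  case (Suc l)
  show ?case
  proof (cases "l = 0")
    case True
    then show ?thesis using good_id by (simp add: blk_def)
  next
    case False
    have ih: "goodHom (Vl (blk z l)) [((of_nat l, 0), z)]" using Suc.IH False by simp
    have g0: "goodHom (Vl (blk z l) @ [((1, 0), z - of_nat l)]) ([((of_nat l, 0), z)] @ [((1, 0), z - of_nat l)])"
      by (rule good_tens[OF ih good_id])
    have g1: "goodHom (Vl (blk z l) @ [((1, 0), z - of_nat l)]) [((of_nat l, 0), z), ((1, 0), z - of_nat l)]"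
      using g0 by simp
    have e: "Vl (blk z (Suc l)) = Vl (blk z l) @ [((1, 0), z - of_nat l)]" by (simp add: blk_def)
    have "goodHom (Vl (blk z l) @ [((1, 0), z - of_nat l)]) [((of_nat l + 1, 0), z)]"
      by (rule good_comp[OF g1 good_fus])
    then have "goodHom (Vl (blk z (Suc l))) [((of_nat l + 1, 0), z)]"
      using e by simp
    then show ?thesis by (simp add: add.commute)
  qed
qed

definition Lk :: "(nat \<Rightarrow> nat) \<Rightarrow> (nat \<Rightarrow> complex) \<Rightarrow> nat \<Rightarrow> modl" where
  "Lk lam b k = map (\<lambda>s. ((of_nat (lam s), 0), b s)) [0..<k]"

definition ab :: "(nat \<Rightarrow> nat) \<Rightarrow> (nat \<Rightarrow> complex) \<Rightarrow> nat \<Rightarrow> complex list" where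
  "ab lam b k = concat (map (\<lambda>s. blk (b s) (lam s)) [0..<k])"

lemma good_blocks: "\<forall>s<k. 0 < lam s \<Longrightarrow> goodHom (Vl (ab lam b k)) (Lk lam b k)"
proof (induction k)
  case 0 then show ?case using good_id by (simp add: ab_def Lk_def)
next
  case (Suc k)
  have "goodHom (Vl (ab lam b k) @ Vl (blk (b k) (lam k))) (Lk lam b k @ [((of_nat (lam k), 0), b k)])"
    using good_tens[OF Suc.IH good_block] Suc.prems by simp
  then show ?case by (simp add: ab_def Lk_def)
qed

lemma mset_ab: "mset (ab lam b k) = (\<Sum>s<k. mset (map (\<lambda>m. b s - of_nat m) [0..<lam s]))"
  by (induction k) (simp_all add: ab_def blk_def)



lemma bparity_qc: "bparity p = odd (qc p)" by (simp add: bparity_def qc_def)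

lemma hom_to_Yhom:
  assumes H: "isHom A B M" and V: "vacM nA nB M c" and c: "c \<noteq> 0"
    and lA: "length A = nA" and lB: "length B = nB"
    and YA: "\<And>i j p q. YE A i j p q = Yent lamsA zsA nA i j p q"
    and YB: "\<And>i j p q. YE B i j p q = Yent lamsB zsB nB i j p q"
    and cyc: "Ycyclic lamsB zsB nB"
  shows "\<exists>f. Yhom lamsA zsA nA lamsB zsB nB f \<and> f ` space nA = space nB \<and> f (vac nA) = vac nB"
proof -
  define d where "d = inverse c"
  have dc: "d * c = 1" using c by (simp add: d_def)
  define f where "f v = (\<lambda>p. if length p = nB then (\<Sum>q\<in>basis nA. d * M p q * v q) else 0)" for v :: "bool list \<Rightarrow> complex"
  have f_space: "f v \<in> space nB" for v by (simp add: f_def space_def)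
  have f_add: "f (\<lambda>p. u p + w p) = (\<lambda>p. f u p + f w p)" for u w
    by (rule ext) (simp add: f_def sum.distrib distrib_left)
  have f_smult: "f (\<lambda>p. e * u p) = (\<lambda>p. e * f u p)" for e u
    by (rule ext) (simp add: f_def sum_distrib_left mult_ac)
  have f_vac: "f (vac nA) = vac nB"
  proof (rule ext)
    fix p :: "bool list"
    show "f (vac nA) p = vac nB p"
    proof (cases "length p = nB")
      case True
      have "(\<Sum>q\<in>basis nA. d * M p q * vac nA q) = (\<Sum>q\<in>basis nA. if q = replicate nA False then d * M p q else 0)"
        by (rule sum.cong) (auto simp: vac_def)
      also have "\<dots> = d * M p (replicate nA False)" by (simp add: sum.delta)
      also have "\<dots> = vac nB p" using V dc unfolding vacM_def by (simp add: vac_def)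
      finally show ?thesis using True by (simp add: f_def)
    next
      case False
      then have "p \<noteq> replicate nB False" by auto
      then show ?thesis using False by (simp add: f_def vac_def)
    qed
  qed
  have f_homog: "f v \<in> homog nB e" if "v \<in> homog nA e" for v e
  proof -
    have "bparity p = e" if nz: "f v p \<noteq> 0" for p
    proof -
      have "(\<Sum>q\<in>basis nA. d * M p q * v q) \<noteq> 0" using nz by (simp add: f_def split: if_splits)
      then obtain q where "q \<in> basis nA" "d * M p q * v q \<noteq> 0"
        by (meson sum.not_neutral_contains_not_neutral)
      then have "M p q \<noteq> 0" "v q \<noteq> 0" by auto
      then have "even (qc p) \<longleftrightarrow> even (qc q)" "bparity q = e"
        using isHomD1[OF H] \<open>v \<in> homog nA e\<close> unfolding homog_def by auto
      then show ?thesis by (simp add: bparity_qc)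
    qed
    then show ?thesis using f_space unfolding homog_def by blast
  qed
  have key: "(\<Sum>s\<in>basis nB. fps_nth (Yent lamsB zsB nB i j p s) r * M s t) =
      (\<Sum>q\<in>basis nA. M p q * fps_nth (Yent lamsA zsA nA i j q t) r)"
    if "length p = nB" "length t = nA" for i j p t r
  proof -
    have "(\<Sum>s\<in>basis (length B). YE B i j p s * fps_const (M s t)) = (\<Sum>q\<in>basis (length A). fps_const (M p q) * YE A i j q t)"
      by (rule isHomD2[OF H]) (use that lA lB in simp_all)
    then have "fps_nth (\<Sum>s\<in>basis nB. Yent lamsB zsB nB i j p s * fps_const (M s t)) r =
        fps_nth (\<Sum>q\<in>basis nA. fps_const (M p q) * Yent lamsA zsA nA i j q t) r"
      using lA lB by (simp add: YA YB)
    then show ?thesis by (simp add: fps_sum_nth mult_ac)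
  qed
  have f_Y: "f (Yact lamsA zsA nA r i j v) = Yact lamsB zsB nB r i j (f v)" for r i j v
  proof (rule ext)
    fix p :: "bool list"
    show "f (Yact lamsA zsA nA r i j v) p = Yact lamsB zsB nB r i j (f v) p"
    proof (cases "length p = nB")
      case False then show ?thesis by (simp add: f_def Yact_def)
    next
      case True
      let ?A = "\<lambda>q t. fps_nth (Yent lamsA zsA nA i j q t) r"
      let ?B = "\<lambda>s. fps_nth (Yent lamsB zsB nB i j p s) r"
      have "f (Yact lamsA zsA nA r i j v) p = (\<Sum>q\<in>basis nA. d * M p q * (\<Sum>t\<in>basis nA. ?A q t * v t))"
        using True by (simp add: f_def Yact_def)
      also have "\<dots> = (\<Sum>q\<in>basis nA. \<Sum>t\<in>basis nA. d * (M p q * ?A q t) * v t)"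
        by (simp add: sum_distrib_left mult_ac)
      also have "\<dots> = (\<Sum>t\<in>basis nA. \<Sum>q\<in>basis nA. d * (M p q * ?A q t) * v t)"
        by (rule sum.swap)
      also have "\<dots> = (\<Sum>t\<in>basis nA. d * (\<Sum>q\<in>basis nA. M p q * ?A q t) * v t)"
        by (simp add: sum_distrib_left sum_distrib_right mult_ac)
      also have "\<dots> = (\<Sum>t\<in>basis nA. d * (\<Sum>s\<in>basis nB. ?B s * M s t) * v t)"
        by (rule sum.cong[OF refl]) (simp add: key[OF True])
      also have "\<dots> = (\<Sum>t\<in>basis nA. \<Sum>s\<in>basis nB. d * (?B s * M s t) * v t)"
        by (simp add: sum_distrib_left sum_distrib_right mult_ac)
      also have "\<dots> = (\<Sum>s\<in>basis nB. \<Sum>t\<in>basis nA. d * (?B s * M s t) * v t)"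
        by (rule sum.swap)
      also have "\<dots> = (\<Sum>s\<in>basis nB. ?B s * (\<Sum>t\<in>basis nA. d * M s t * v t))"
        by (simp add: sum_distrib_left mult_ac)
      also have "\<dots> = Yact lamsB zsB nB r i j (f v) p"
        using True by (simp add: Yact_def f_def)
      finally show ?thesis .
    qed
  qed
  have Yact_space: "Yact lamsA zsA nA r i j v \<in> space nA" for r i j v
    by (simp add: Yact_def space_def)
  have hom: "Yhom lamsA zsA nA lamsB zsB nB f"
    unfolding Yhom_def using f_space f_add f_smult f_homog f_Y by simp
  have surj: "f ` space nA = space nB"
  proof -
    let ?W = "f ` space nA"
    have "?W \<subseteq> space nB" using f_space by blast
    moreover have "vac nB \<in> ?W"
    proof -
      have vs: "vac nA \<in> space nA" by (simp add: vac_def space_def)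
      show ?thesis by (rule image_eqI[where x="vac nA"]) (simp_all add: f_vac vs)
    qed
    moreover have "\<forall>u\<in>?W. \<forall>w\<in>?W. (\<lambda>p. u p + w p) \<in> ?W"
    proof (intro ballI)
      fix u w assume "u \<in> ?W" "w \<in> ?W"
      then obtain u' w' where "u' \<in> space nA" "w' \<in> space nA" "u = f u'" "w = f w'" by blast
      then have "(\<lambda>p. u' p + w' p) \<in> space nA" "(\<lambda>p. u p + w p) = f (\<lambda>p. u' p + w' p)"
        by (simp_all add: space_def f_add)
      then show "(\<lambda>p. u p + w p) \<in> ?W" by (intro image_eqI[where x="\<lambda>p. u' p + w' p"])
    qed
    moreover have "\<forall>e::complex. \<forall>u\<in>?W. (\<lambda>p. e * u p) \<in> ?W"
    proof (intro allI ballI)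
      fix e :: complex and u assume "u \<in> ?W"
      then obtain u' where "u' \<in> space nA" "u = f u'" by blast
      then have "(\<lambda>p. e * u' p) \<in> space nA" "(\<lambda>p. e * u p) = f (\<lambda>p. e * u' p)"
        by (simp_all add: space_def f_smult)
      then show "(\<lambda>p. e * u p) \<in> ?W" by (intro image_eqI[where x="\<lambda>p. e * u' p"])
    qed
    moreover have "\<forall>r\<ge>1. \<forall>i j. \<forall>u\<in>?W. Yact lamsB zsB nB r i j u \<in> ?W"
    proof (intro allI impI ballI)
      fix r i j u assume "u \<in> ?W"
      then obtain u' where "u' \<in> space nA" "u = f u'" by blast
      then have "Yact lamsB zsB nB r i j u = f (Yact lamsA zsA nA r i j u')" by (simp add: f_Y)
      then show "Yact lamsB zsB nB r i j u \<in> ?W" by (intro image_eqI[where x="Yact lamsA zsA nA r i j u'"] Yact_space)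
    qed
    ultimately have C: "?W \<subseteq> space nB \<and> vac nB \<in> ?W
      \<and> (\<forall>u\<in>?W. \<forall>w\<in>?W. (\<lambda>p. u p + w p) \<in> ?W)
      \<and> (\<forall>c::complex. \<forall>u\<in>?W. (\<lambda>p. c * u p) \<in> ?W)
      \<and> (\<forall>r\<ge>1. \<forall>i j. \<forall>u\<in>?W. Yact lamsB zsB nB r i j u \<in> ?W)" by (intro conjI)
    have "?W \<subseteq> space nB \<and> vac nB \<in> ?W
      \<and> (\<forall>u\<in>?W. \<forall>w\<in>?W. (\<lambda>p. u p + w p) \<in> ?W)
      \<and> (\<forall>c::complex. \<forall>u\<in>?W. (\<lambda>p. c * u p) \<in> ?W)
      \<and> (\<forall>r\<ge>1. \<forall>i j. \<forall>u\<in>?W. Yact lamsB zsB nB r i j u \<in> ?W) \<longrightarrow> ?W = space nB"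
      by (rule spec[where x="f ` space nA", OF cyc[unfolded Ycyclic_def]])
    then show ?thesis using C by (rule mp)
  qed
  show ?thesis by (rule exI[of _ f]) (simp only: hom surj f_vac simp_thms)
qed



theorem lemma5p2:
  fixes k :: nat and lam :: "nat \<Rightarrow> nat" and b :: "nat \<Rightarrow> complex" and a :: "complex list"
  assumes "\<forall>s<k. 0 < lam s"
    and "mset a = (\<Sum>s<k. mset (map (\<lambda>m. b s - of_nat m) [0..<lam s]))"
    and "sorted_wrt (\<lambda>x y. Re y \<le> Re x) a"
    and "Ycyclic (\<lambda>s. (of_nat (lam s), 0)) b k"
  shows "\<exists>f. Yhom (\<lambda>_. (1, 0)) (\<lambda>s. a ! s) (length a) (\<lambda>s. (of_nat (lam s), 0)) b k f
           \<and> f ` space (length a) = space k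
           \<and> f (vac (length a)) = vac k"
proof -
  have sw: "sorted_wrt (\<lambda>x y. y \<noteq> x + 1) a"
  proof (rule sorted_wrt_mono_rel[OF _ assms(3)])
    fix x y :: complex assume "Re y \<le> Re x"
    then show "y \<noteq> x + 1" by auto
  qed
  have m: "mset a = mset (ab lam b k)" using assms(2) by (simp add: mset_ab)
  have g: "goodHom (Vl a) (Lk lam b k)"
    by (rule good_comp[OF good_perm[OF m sw] good_blocks[OF assms(1)]])
  then obtain M c where H: "isHom (Vl a) (Lk lam b k) M" and V: "vacM (length (Vl a)) (length (Lk lam b k)) M c"
    and c: "c \<noteq> 0" unfolding goodHom_def by blast
  have lL: "length (Lk lam b k) = k" by (simp add: Lk_def)
  have lV: "length (Vl a) = length a" by simp
  have YA: "YE (Vl a) i j p q = Yent (\<lambda>_. (1, 0)) (\<lambda>s. a ! s) (length a) i j p q" for i j p q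
    unfolding YE_def lV by (rule Yent_cong) (simp add: Vl_def)
  have YB: "YE (Lk lam b k) i j p q = Yent (\<lambda>s. (of_nat (lam s), 0)) b k i j p q" for i j p q
    unfolding YE_def lL by (rule Yent_cong) (simp add: Lk_def)
  show ?thesis
    by (rule hom_to_Yhom[OF H V[unfolded lV lL] c lV lL YA YB assms(4)])
qed

end
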